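(* For all $n,m$ and every distribution $\mathcal{D}$ supported on $[0,1]$, plurality is an $\alpha$-expected-welfare-maximizing rule for $\mathcal{D}$ with $\alpha=\max(\frac1m,\frac1n)$: for every preference profile $\sigma$, any alternative $p$ ranked first by the largest number of voters satisfies $\mathbb{E}[\mathrm{sw}(p,u)]\ge\max(\frac1m,\frac1n)\max_{j\in A}\mathbb{E}[\mathrm{sw}(j,u)]$.
   Context: There are $n$ voters and $m$ alternatives $A=\{1,\dots,m\}$. A preference profile $\sigma$ consists of a ranking of $A$ for each voter. Given $\mathcal{D}$ and $\sigma$, a random utility profile $u$ consistent with $\sigma$ is generated as follows: independently for each voter $i$, draw $m$ i.i.d. samples from $\mathcal{D}$ and assign them, from highest to lowest, to the alternatives in the order of voter $i$'s ranking. The social welfare of $j$ is $\mathrm{sw}(j,u)=\sum_i u_{ij}$; expectations are over $u$. *)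

theory Defs
  imports "HOL-Probability.Probability"
begin

text \<open>Alternatives are 0,...,m-1, voters are 0,...,n-1.
  A preference profile is given by rank positions: r i j is the position
  (0 = top) of alternative j in voter i's ranking; each r i restricted to
  {0..<m} is a bijection onto {0..<m}.\<close>

definition is_profile :: "nat \<Rightarrow> nat \<Rightarrow> (nat \<Rightarrow> nat \<Rightarrow> nat) \<Rightarrow> bool" where
  "is_profile n m r \<longleftrightarrow> (\<forall>i<n. bij_betw (r i) {..<m} {..<m})"

definition sample_space :: "nat \<Rightarrow> nat \<Rightarrow> real measure \<Rightarrow> (nat \<times> nat \<Rightarrow> real) measure" where
  "sample_space n m D = PiM ({..<n} \<times> {..<m}) (\<lambda>_. D)"

definition util :: "nat \<Rightarrow> (nat \<Rightarrow> nat \<Rightarrow> nat) \<Rightarrow> (nat \<times> nat \<Rightarrow> real) \<Rightarrow> nat \<Rightarrow> nat \<Rightarrow> real" where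
  "util m r x i j = rev (sort (map (\<lambda>k. x (i, k)) [0..<m])) ! r i j"

definition sw :: "nat \<Rightarrow> nat \<Rightarrow> (nat \<Rightarrow> nat \<Rightarrow> nat) \<Rightarrow> (nat \<times> nat \<Rightarrow> real) \<Rightarrow> nat \<Rightarrow> real" where
  "sw n m r x j = (\<Sum>i<n. util m r x i j)"

definition exp_sw :: "nat \<Rightarrow> nat \<Rightarrow> real measure \<Rightarrow> (nat \<Rightarrow> nat \<Rightarrow> nat) \<Rightarrow> nat \<Rightarrow> real" where
  "exp_sw n m D r j = integral\<^sup>L (sample_space n m D) (\<lambda>x. sw n m r x j)"

definition plurality_score :: "nat \<Rightarrow> (nat \<Rightarrow> nat \<Rightarrow> nat) \<Rightarrow> nat \<Rightarrow> nat" where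
  "plurality_score n r j = card {i. i < n \<and> r i j = 0}"

end

theory Submission
  imports Defs
begin

lemma insort_nth:
  fixes a :: real
  assumes "sorted ys" "k \<le> length ys"
  shows "insort a ys ! k = (if k = 0 then (if ys = [] then a else min a (ys!0))
     else if k = length ys then max (ys!(k-1)) a else max (ys!(k-1)) (min a (ys!k)))"
  using assms
proof (induction ys arbitrary: k)
  case Nil then show ?case by simp
next
  case (Cons y ys)
  have ys: "sorted ys" and yle: "\<forall>z\<in>set ys. y \<le> z" using Cons.prems by auto
  show ?case
  proof (cases "a \<le> y")
    case True
    show ?thesis
    proof (cases k)
      case 0 then show ?thesis using True by simp
    next
      case (Suc q)
      have "a \<le> (y#ys)!k" if "k < length (y#ys)" using True yle that
        by (cases k) (auto intro: order_trans)
      moreover have "a \<le> (y#ys)!q" using True yle Cons.prems Suc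
        by (cases q) (auto intro: order_trans)
      ultimately show ?thesis using True Suc Cons.prems by (auto simp: max_def min_def)
    qed
  next
    case False
    show ?thesis
    proof (cases k)
      case 0 then show ?thesis using False by simp
    next
      case (Suc q)
      have IH: "insort a ys ! q = (if q = 0 then (if ys = [] then a else min a (ys!0))
         else if q = length ys then max (ys!(q-1)) a else max (ys!(q-1)) (min a (ys!q)))"
        using Cons.IH[OF ys] Cons.prems Suc by simp
      show ?thesis
      proof (cases q)
        case 0
        then show ?thesis using IH False Suc yle
          by (cases ys) (auto simp: max_def min_def)
      next
        case (Suc q')
        then show ?thesis using IH False \<open>k = Suc q\<close> by (auto simp: nth_Cons')
      qed
    qed
  qed
qed

lemma sort_Nil_iff: "(sort xs = []) = (xs = [])"
  by (metis length_0_conv length_sort)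

lemma meas_sort_nth:
  fixes fs :: "('a \<Rightarrow> real) list"
  assumes "\<forall>f\<in>set fs. f \<in> borel_measurable M" "k < length fs"
  shows "(\<lambda>x. sort (map (\<lambda>f. f x) fs) ! k) \<in> borel_measurable M"
  using assms
proof (induction fs arbitrary: k)
  case Nil then show ?case by simp
next
  case (Cons f fs)
  let ?s = "\<lambda>x. sort (map (\<lambda>f. f x) fs)"
  have len: "length (?s x) = length fs" for x by simp
  have e: "sort (map (\<lambda>f. f x) (f#fs)) ! k = (if k = 0 then (if fs = [] then f x else min (f x) (?s x!0))
     else if k = length fs then max (?s x!(k-1)) (f x) else max (?s x!(k-1)) (min (f x) (?s x!k)))" for x
    using insort_nth[of "?s x" k "f x"] Cons.prems sort_Nil_iff[of "map (\<lambda>f. f x) fs"] by simp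
  have m: "\<And>q. q < length fs \<Longrightarrow> (\<lambda>x. ?s x ! q) \<in> borel_measurable M"
    using Cons by auto
  have f: "f \<in> borel_measurable M" using Cons.prems by auto
  show ?case unfolding e
    using Cons.prems m f
    by (cases "k = 0"; cases "fs = []"; cases "k = length fs")
       (auto intro!: borel_measurable_max borel_measurable_min m)
qed


lemma sorted_facts:
  fixes xs :: "real list"
  assumes "\<forall>v\<in>set xs. 0 \<le> v \<and> v \<le> 1" "q < length xs"
  shows "0 \<le> sort xs ! q" "sort xs ! q \<le> sort xs ! (length xs - 1)" "sort xs ! (length xs - 1) \<le> 1"
proof -
  have "sort xs ! q \<in> set xs" using assms(2) by (metis length_sort nth_mem set_sort)
  then show "0 \<le> sort xs ! q" using assms by auto
  show "sort xs ! q \<le> sort xs ! (length xs - 1)"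
    using assms(2) by (intro sorted_nth_mono) auto
  have "sort xs ! (length xs - 1) \<in> set xs" using assms(2)
    by (metis diff_less length_sort less_nat_zero_code neq0_conv nth_mem set_sort zero_less_one)
  then show "sort xs ! (length xs - 1) \<le> 1" using assms by auto
qed

lemma card_top:
  assumes "bij_betw f {..<m} {..<m}" "0 < (m::nat)"
  shows "card {j. j < m \<and> f j = 0} = 1"
proof -
  obtain j0 where j0: "j0 < m" "f j0 = 0" using assms
    by (metis bij_betw_imp_surj_on imageE lessThan_iff)
  have "{j. j < m \<and> f j = 0} = {j0}"
    using j0 assms(1) unfolding bij_betw_def inj_on_def by auto
  then show ?thesis by simp
qed

lemma score_sum:
  assumes "is_profile n m r" "0 < m"
  shows "(\<Sum>j<m. plurality_score n r j) = n"
proof -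
  have "(\<Sum>j<m. plurality_score n r j) = (\<Sum>j<m. \<Sum>i<n. if r i j = 0 then 1 else 0)"
    unfolding plurality_score_def by (intro sum.cong refl) (simp add: sum.If_cases Int_def lessThan_def conj_commute)
  also have "\<dots> = (\<Sum>i<n. \<Sum>j<m. if r i j = 0 then 1 else 0)" by (rule sum.swap)
  also have "\<dots> = (\<Sum>i<n. 1)"
  proof (intro sum.cong refl)
    fix i assume "i \<in> {..<n}"
    then have "card {j. j < m \<and> r i j = 0} = 1" using assms card_top unfolding is_profile_def by auto
    then show "(\<Sum>j<m. if r i j = 0 then 1 else 0) = (1::nat)"
      by (simp add: sum.If_cases Int_def lessThan_def conj_commute)
  qed
  finally show ?thesis by simp
qed


theorem theorem13:
  fixes n m :: nat and D :: "real measure" and r :: "nat \<Rightarrow> nat \<Rightarrow> nat" and p :: nat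
  assumes "0 < n"
    and "prob_space D" and "sets D = sets borel"
    and "AE x in D. x \<in> {0..1}"
    and "is_profile n m r"
    and "p < m"
    and "\<forall>j<m. plurality_score n r j \<le> plurality_score n r p"
  shows "exp_sw n m D r p \<ge>
           max (1 / real m) (1 / real n) * Max ((\<lambda>j. exp_sw n m D r j) ` {..<m})"
proof -
  define I where "I = {..<n} \<times> {..<m}"
  define P where "P = sample_space n m D"
  have P_def': "P = PiM I (\<lambda>_. D)" unfolding P_def sample_space_def I_def by simp
  interpret P: prob_space P unfolding P_def' by (intro prob_space_PiM assms(2))
  have m0: "0 < m" using assms(6) by simp
  have rlt: "r i j < m" if "i < n" "j < m" for i j
    using assms(5) that unfolding is_profile_def bij_betw_def by auto
  define xs where "xs x i = map (\<lambda>k. x (i, k)) [0..<m]" for x :: "nat \<times> nat \<Rightarrow> real" and i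
  define T where "T x i = sort (xs x i) ! (m - 1)" for x i
  have util_eq: "util m r x i j = sort (xs x i) ! (m - 1 - r i j)" if "i < n" "j < m" for x i j
    unfolding util_def xs_def[symmetric] using rlt[OF that]
    by (simp add: rev_nth xs_def)
  have compD: "(\<lambda>x. x (i,k)) \<in> borel_measurable P" if "i < n" "k < m" for i k
  proof -
    have "(\<lambda>x. x (i,k)) \<in> measurable P D" unfolding P_def'
      by (rule measurable_component_singleton) (use that in \<open>auto simp: I_def\<close>)
    then show ?thesis using measurable_cong_sets[OF refl assms(3), of P] by metis
  qed
  have meas_q: "(\<lambda>x. sort (xs x i) ! q) \<in> borel_measurable P" if "i < n" "q < m" for i q
  proof -
    have "xs x i = map (\<lambda>f. f x) (map (\<lambda>k x. x (i, k)) [0..<m])" for x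
      by (simp add: xs_def)
    then show ?thesis using that
      by (simp only:) (rule meas_sort_nth, auto intro: compD)
  qed
  have AEb: "AE x in P. \<forall>ik\<in>I. x ik \<in> {0..1}"
  proof (subst AE_ball_countable)
    show "countable I" unfolding I_def by simp
    show "\<forall>ik\<in>I. AE x in P. x ik \<in> {0..1}"
    proof
      fix ik assume ik: "ik \<in> I"
      have mm: "(\<lambda>x. x ik) \<in> measurable P D" unfolding P_def'
        by (rule measurable_component_singleton) (use ik in auto)
      have "distr P D (\<lambda>x. x ik) = D" unfolding P_def'
        by (rule distr_PiM_component) (use ik assms(2) in auto)
      then have "AE x in distr P D (\<lambda>x. x ik). x \<in> {0..1}" using assms(4) by metis
      then show "AE x in P. x ik \<in> {0..1}" by (rule AE_distrD[OF mm])
    qed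
  qed
  have pw: "0 \<le> sort (xs x i) ! q \<and> sort (xs x i) ! q \<le> T x i \<and> T x i \<le> 1"
    if x: "\<forall>ik\<in>I. x ik \<in> {0..1}" and "i < n" "q < m" for x i q
  proof -
    have "\<forall>v\<in>set (xs x i). 0 \<le> v \<and> v \<le> 1" using x that unfolding xs_def I_def by auto
    moreover have "length (xs x i) = m" by (simp add: xs_def)
    ultimately show ?thesis using sorted_facts[of "xs x i" q] that unfolding T_def by auto
  qed
  have int_q: "integrable P (\<lambda>x. sort (xs x i) ! q)" if "i < n" "q < m" for i q
  proof (rule P.integrable_const_bound[where B=1])
    show "AE x in P. norm (sort (xs x i) ! q) \<le> 1"
      using AEb by eventually_elim (use pw that in \<open>fastforce\<close>)
  qed (rule meas_q[OF that])
  define c where "c = integral\<^sup>L (PiM {..<m} (\<lambda>_. D)) (\<lambda>y. sort (map y [0..<m]) ! (m - 1))"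
  have ET: "integral\<^sup>L P (\<lambda>x. T x i) = c" if "i < n" for i
  proof -
    have ds: "distr P (PiM {..<m} (\<lambda>_. D)) (\<lambda>\<omega>. \<lambda>k\<in>{..<m}. \<omega> (i, k)) = PiM {..<m} (\<lambda>_. D)"
      unfolding P_def' using distr_PiM_reindex[of I "\<lambda>_. D" "\<lambda>k. (i, k)" "{..<m}"] that assms(2)
      by (auto simp: I_def inj_on_def)
    have gm: "(\<lambda>\<omega>. \<lambda>k\<in>{..<m}. \<omega> (i, k)) \<in> measurable P (PiM {..<m} (\<lambda>_. D))"
      unfolding P_def' using that by (auto simp: I_def intro!: measurable_restrict measurable_component_singleton)
    have hm: "(\<lambda>y. sort (map y [0..<m]) ! (m - 1)) \<in> borel_measurable (PiM {..<m} (\<lambda>_. D))"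
    proof -
      have "map y [0..<m] = map (\<lambda>f. f y) (map (\<lambda>k y. y k) [0..<m])" for y :: "nat \<Rightarrow> real"
        by simp
      moreover have "(\<lambda>y. y k) \<in> borel_measurable (PiM {..<m} (\<lambda>_. D))" if "k < m" for k
        using measurable_component_singleton[of k "{..<m}" "\<lambda>_. D"] that
          measurable_cong_sets[OF refl assms(3), of "PiM {..<m} (\<lambda>_. D)"] by auto
      ultimately show ?thesis using m0
        by (simp only:) (rule meas_sort_nth, auto)
    qed
    have "c = integral\<^sup>L P (\<lambda>x. sort (map (\<lambda>k\<in>{..<m}. x (i, k)) [0..<m]) ! (m - 1))"
      unfolding c_def using integral_distr[OF gm hm] ds by simp
    also have "\<dots> = integral\<^sup>L P (\<lambda>x. T x i)"
      unfolding T_def xs_def by (intro Bochner_Integration.integral_cong refl arg_cong2[where f=nth] arg_cong[where f=sort] map_cong) auto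
    finally show ?thesis by simp
  qed
  have c0: "0 \<le> c"
  proof -
    have "0 \<le> integral\<^sup>L P (\<lambda>x. T x 0)"
      by (rule integral_nonneg_AE, use AEb in eventually_elim) (use pw[of _ 0 "m-1"] assms(1) m0 in \<open>auto simp: T_def\<close>)
    then show ?thesis using ET[OF assms(1)] by simp
  qed
  have Esw: "exp_sw n m D r j = (\<Sum>i<n. integral\<^sup>L P (\<lambda>x. sort (xs x i) ! (m - 1 - r i j)))" if "j < m" for j
  proof -
    have "exp_sw n m D r j = integral\<^sup>L P (\<lambda>x. \<Sum>i<n. sort (xs x i) ! (m - 1 - r i j))"
      unfolding exp_sw_def P_def[symmetric] sw_def
      by (intro Bochner_Integration.integral_cong refl sum.cong) (use util_eq that in auto)
    also have "\<dots> = (\<Sum>i<n. integral\<^sup>L P (\<lambda>x. sort (xs x i) ! (m - 1 - r i j)))"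
      by (rule Bochner_Integration.integral_sum) (use int_q m0 in auto)
    finally show ?thesis .
  qed
  have upper: "exp_sw n m D r j \<le> n * c" if "j < m" for j
  proof -
    have "exp_sw n m D r j \<le> (\<Sum>i<n. c)"
      unfolding Esw[OF that]
    proof (rule sum_mono)
      fix i assume i: "i \<in> {..<n}"
      have "integral\<^sup>L P (\<lambda>x. sort (xs x i) ! (m - 1 - r i j)) \<le> integral\<^sup>L P (\<lambda>x. T x i)"
      proof (rule integral_mono_AE)
        show "integrable P (\<lambda>x. sort (xs x i) ! (m - 1 - r i j))" using int_q i m0 by auto
        show "integrable P (\<lambda>x. T x i)" unfolding T_def using int_q i m0 by auto
        show "AE x in P. sort (xs x i) ! (m - 1 - r i j) \<le> T x i"
          using AEb by eventually_elim (use pw i m0 in auto)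
      qed
      then show "integral\<^sup>L P (\<lambda>x. sort (xs x i) ! (m - 1 - r i j)) \<le> c" using ET i by auto
    qed
    then show ?thesis by simp
  qed
  define s where "s = plurality_score n r p"
  have lower: "real s * c \<le> exp_sw n m D r p"
  proof -
    define S where "S = {i. i < n \<and> r i p = 0}"
    have "real s * c = (\<Sum>i\<in>S. c)" unfolding s_def plurality_score_def S_def by simp
    also have "\<dots> = (\<Sum>i\<in>S. integral\<^sup>L P (\<lambda>x. sort (xs x i) ! (m - 1 - r i p)))"
      by (intro sum.cong refl) (use ET in \<open>auto simp: S_def T_def\<close>)
    also have "\<dots> \<le> (\<Sum>i<n. integral\<^sup>L P (\<lambda>x. sort (xs x i) ! (m - 1 - r i p)))"
    proof (rule sum_mono2)
      show "S \<subseteq> {..<n}" by (auto simp: S_def)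
      fix i assume "i \<in> {..<n} - S"
      then have i: "i < n" by auto
      show "0 \<le> integral\<^sup>L P (\<lambda>x. sort (xs x i) ! (m - 1 - r i p))"
        by (rule integral_nonneg_AE, use AEb in eventually_elim) (use pw i m0 in auto)
    qed simp
    also have "\<dots> = exp_sw n m D r p" using Esw[OF assms(6)] by simp
    finally show ?thesis .
  qed
  have ssum: "(\<Sum>j<m. plurality_score n r j) = n" by (rule score_sum[OF assms(5) m0])
  have "n \<le> m * s"
  proof -
    have "(\<Sum>j<m. plurality_score n r j) \<le> (\<Sum>j<m. s)"
      by (rule sum_mono) (use assms(7) in \<open>auto simp: s_def\<close>)
    then show ?thesis using ssum by simp
  qed
  then have ms: "real n \<le> real m * real s" by (metis of_nat_le_iff of_nat_mult)
  have s1: "1 \<le> real s" using \<open>n \<le> m * s\<close> assms(1) by (cases s) auto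
  have Mx: "Max ((\<lambda>j. exp_sw n m D r j) ` {..<m}) \<le> n * c"
    using upper m0 by (subst Max_le_iff) auto
  have a0: "0 \<le> max (1 / real m) (1 / real n)" by (simp add: le_max_iff_disj)
  have key: "max (1 / real m) (1 / real n) * real n \<le> real s"
  proof -
    have "real n / real m \<le> real s" using ms m0 by (simp add: divide_le_eq mult.commute)
    then show ?thesis using s1 assms(1) by (auto simp: max_def)
  qed
  have "max (1 / real m) (1 / real n) * Max ((\<lambda>j. exp_sw n m D r j) ` {..<m})
        \<le> max (1 / real m) (1 / real n) * (n * c)"
    by (rule mult_left_mono[OF Mx a0])
  also have "\<dots> = (max (1 / real m) (1 / real n) * real n) * c" by simp
  also have "\<dots> \<le> real s * c" by (rule mult_right_mono[OF key c0])
  also have "\<dots> \<le> exp_sw n m D r p" by (rule lower)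
  finally show ?thesis .
qed

end
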